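(* Let $n>p=p_n$ and $r_n=(-\log(1-\frac pn))^{1/2}$. Assume $p/n\to y\in(0,1]$ and $t=t_n=O(1/r_n)$ as $n\to\infty$ ($t_n$ real). Then $$\log\Big[\frac{\Gamma(\frac n2+t)}{\Gamma(\frac n2)}\cdot\frac{\Gamma(\frac{n-p}2)}{\Gamma(\frac{n-p}2+t)}\Big]=r_n^2t+o(1)$$ as $n\to\infty$.
   Context: $\Gamma$ is the Gamma function. *)

theory Defs
  imports "HOL-Analysis.Analysis" "HOL-Library.Landau_Symbols"
begin

definition r_seq :: "(nat \<Rightarrow> nat) \<Rightarrow> nat \<Rightarrow> real" where
  "r_seq p n = sqrt (- ln (1 - real (p n) / real n))"

end

theory Submission
  imports Defs "HOL-Real_Asymp.Real_Asymp"
begin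


lemma ln_telescope:
  fixes x :: real assumes "x > 0"
  shows "ln (x + real m) - ln x = (\<Sum>k<m. ln (x + real k + 1) - ln (x + real k))"
  using sum_lessThan_telescope[of "\<lambda>k. ln (x + real k)" m] by (simp add: add_ac)

lemma ln_step_bounds:
  fixes u :: real assumes "u > 0"
  shows "1/(u+1) \<le> ln (u+1) - ln u" "ln (u+1) - ln u \<le> 1/u"
proof -
  have "ln ((u+1)/u) \<le> (u+1)/u - 1" using assms by (intro ln_le_minus_one) auto
  then show "ln (u+1) - ln u \<le> 1/u" using assms by (simp add: ln_div field_simps)
  have "ln (u/(u+1)) \<le> u/(u+1) - 1" using assms by (intro ln_le_minus_one) auto
  then show "1/(u+1) \<le> ln (u+1) - ln u" using assms by (simp add: ln_div field_simps)
qed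

lemma Digamma_bounds:
  fixes x :: real assumes x: "x > 0"
  shows "ln x - 1/x \<le> Digamma x" "Digamma x \<le> ln x"
proof -
  define S where "S m = (\<Sum>k<m. inverse (x + real k))" for m
  have lim: "(\<lambda>m. ln (real m) - S m) \<longlonglongrightarrow> Digamma x"
    using Digamma_LIMSEQ[of x] x by (simp add: S_def)
  have lo: "ln (x + real m) - ln x \<le> S m" for m
    unfolding ln_telescope[OF x] S_def
    by (intro sum_mono) (use ln_step_bounds(2)[of "x + real _"] x in \<open>auto simp: field_simps\<close>)
  have hi: "S m \<le> 1/x + (ln (x + real m) - ln x)" for m
  proof -
    have "S m \<le> (\<Sum>k<Suc m. inverse (x + real k))" unfolding S_def
      by (intro sum_mono2) (use x in auto)
    also have "\<dots> = 1/x + (\<Sum>k<m. inverse (x + real k + 1))"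
      by (subst sum.lessThan_Suc_shift) (simp add: add_ac inverse_eq_divide)
    also have "(\<Sum>k<m. inverse (x + real k + 1)) \<le> (\<Sum>k<m. ln (x + real k + 1) - ln (x + real k))"
      by (intro sum_mono) (use ln_step_bounds(1)[of "x + real _"] x in \<open>auto simp: inverse_eq_divide\<close>)
    finally show ?thesis unfolding ln_telescope[OF x] by simp
  qed
  have l0: "(\<lambda>m. ln (real m) - ln (x + real m)) \<longlonglongrightarrow> 0"
    using x by real_asymp
  have "(\<lambda>m. ln x + (ln (real m) - ln (x + real m))) \<longlonglongrightarrow> ln x + 0"
    by (intro tendsto_intros l0)
  then show "Digamma x \<le> ln x"
    by (intro LIMSEQ_le[OF lim]) (use lo in \<open>auto intro!: exI[of _ 0] simp: algebra_simps\<close>)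
  have "(\<lambda>m. ln x - 1/x + (ln (real m) - ln (x + real m))) \<longlonglongrightarrow> ln x - 1/x + 0"
    by (intro tendsto_intros l0)
  then show "ln x - 1/x \<le> Digamma x"
    by (intro LIMSEQ_le[OF _ lim]) (use hi in \<open>auto intro!: exI[of _ 0] simp: algebra_simps\<close>)
qed

lemma ln_diff_bound:
  fixes a b :: real assumes "a > 0" "b > 0"
  shows "\<bar>ln a - ln b\<bar> \<le> \<bar>a - b\<bar> / min a b"
proof -
  have *: "ln v - ln u \<le> (v - u) / u" if "0 < u" "u \<le> v" for u v :: real
  proof -
    have "ln (v/u) \<le> v/u - 1" using that by (intro ln_le_minus_one) auto
    then show ?thesis using that by (simp add: ln_div field_simps)
  qed
  show ?thesis
  proof (cases "a \<le> b")
    case True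
    with *[of a b] assms show ?thesis by (auto simp: min_def)
  next
    case False
    with *[of b a] assms show ?thesis by (auto simp: min_def)
  qed
qed

lemma ln_Gamma_mvt:
  fixes z t :: real assumes "z > 0" "z + t > 0"
  shows "\<exists>\<xi>. min z (z+t) \<le> \<xi> \<and> \<xi> \<le> max z (z+t) \<and>
           ln_Gamma (z+t) - ln_Gamma z = t * Digamma \<xi>"
proof -
  consider "t = 0" | "t > 0" | "t < 0" by linarith
  then show ?thesis
  proof cases
    case 1 then show ?thesis by (intro exI[of _ z]) auto
  next
    case 2
    have "\<exists>\<xi>. z < \<xi> \<and> \<xi> < z + t \<and> ln_Gamma (z+t) - ln_Gamma z = (z + t - z) * Digamma \<xi>"
      by (rule MVT2) (use 2 assms in \<open>auto intro!: derivative_intros\<close>)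
    then obtain \<xi> where "z < \<xi>" "\<xi> < z + t" "ln_Gamma (z+t) - ln_Gamma z = (z + t - z) * Digamma \<xi>"
      by blast
    then show ?thesis using 2 by (intro exI[of _ \<xi>]) (auto simp: algebra_simps)
  next
    case 3
    have "\<exists>\<xi>. z + t < \<xi> \<and> \<xi> < z \<and> ln_Gamma z - ln_Gamma (z+t) = (z - (z + t)) * Digamma \<xi>"
      by (rule MVT2) (use 3 assms in \<open>auto intro!: derivative_intros\<close>)
    then obtain \<xi> where "z + t < \<xi>" "\<xi> < z" "ln_Gamma z - ln_Gamma (z+t) = (z - (z + t)) * Digamma \<xi>"
      by blast
    then show ?thesis using 3 by (intro exI[of _ \<xi>]) (auto simp: algebra_simps)
  qed
qed

lemma ln_Gamma_incr_bound:
  fixes z t :: real assumes z: "z > 0" and zt: "z + t > 0"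
  shows "\<bar>ln_Gamma (z+t) - ln_Gamma z - t * ln z\<bar> \<le> \<bar>t\<bar> * (1 + \<bar>t\<bar>) / min z (z+t)"
proof -
  define m where "m = min z (z+t)"
  have m: "m > 0" using z zt by (simp add: m_def)
  obtain \<xi> where xi: "m \<le> \<xi>" "\<xi> \<le> max z (z+t)" and eq: "ln_Gamma (z+t) - ln_Gamma z = t * Digamma \<xi>"
    using ln_Gamma_mvt[OF z zt] unfolding m_def by blast
  have xi0: "\<xi> > 0" using xi m by linarith
  have d1: "\<bar>Digamma \<xi> - ln \<xi>\<bar> \<le> 1/\<xi>" using Digamma_bounds[OF xi0] by linarith
  also have "1/\<xi> \<le> 1/m" using xi m by (intro divide_left_mono) auto
  finally have d1': "\<bar>Digamma \<xi> - ln \<xi>\<bar> \<le> 1/m" .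
  have "\<bar>ln \<xi> - ln z\<bar> \<le> \<bar>\<xi> - z\<bar> / min \<xi> z" by (rule ln_diff_bound[OF xi0 z])
  also have "\<bar>\<xi> - z\<bar> \<le> \<bar>t\<bar>" using xi unfolding m_def by (auto simp: max_def min_def split: if_splits)
  hence "\<bar>\<xi> - z\<bar> / min \<xi> z \<le> \<bar>t\<bar> / m"
    using xi m z unfolding m_def by (intro frac_le) auto
  finally have d2: "\<bar>ln \<xi> - ln z\<bar> \<le> \<bar>t\<bar> / m" .
  have "\<bar>Digamma \<xi> - ln z\<bar> \<le> 1/m + \<bar>t\<bar>/m" using d1' d2 by linarith
  hence "\<bar>t\<bar> * \<bar>Digamma \<xi> - ln z\<bar> \<le> \<bar>t\<bar> * (1/m + \<bar>t\<bar>/m)"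
    by (intro mult_left_mono) auto
  moreover have "ln_Gamma (z+t) - ln_Gamma z - t * ln z = t * (Digamma \<xi> - ln z)"
    using eq by (simp add: algebra_simps)
  moreover have "\<bar>t * (Digamma \<xi> - ln z)\<bar> = \<bar>t\<bar> * \<bar>Digamma \<xi> - ln z\<bar>" by (simp add: abs_mult)
  moreover have "\<bar>t\<bar> * (1/m + \<bar>t\<bar>/m) = \<bar>t\<bar> * (1 + \<bar>t\<bar>) / m" using m by (simp add: field_simps)
  ultimately show ?thesis unfolding m_def by metis
qed

lemma pointwise_bound:
  fixes n k :: nat and t T :: real
  assumes kn: "k < n" and ta: "\<bar>t\<bar> \<le> real (n - k) / 2 / 2" and tT: "\<bar>t\<bar> \<le> T"
  shows "\<bar>ln ((Gamma (real n / 2 + t) / Gamma (real n / 2)) *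
                  (Gamma (real (n - k) / 2) / Gamma (real (n - k) / 2 + t)))
              - (sqrt (- ln (1 - real k / real n)))^2 * t\<bar> \<le> 4 * (1 + T) * \<bar>t\<bar> / (real (n - k) / 2)"
proof -
  define x where "x = real n / 2"
  define a where "a = real (n - k) / 2"
  have a1: "a \<ge> 1/2" using kn by (simp add: a_def)
  have xa: "x \<ge> a" using kn by (simp add: a_def x_def)
  have ta': "\<bar>t\<bar> \<le> a/2" using ta by (simp add: a_def)
  have apos: "a > 0" "a + t > 0" "x > 0" "x + t > 0" using a1 xa ta' by linarith+
  have n0: "real n > 0" using kn by simp
  have frac: "1 - real k / real n = a / x" using kn n0 by (simp add: a_def x_def of_nat_diff field_simps)
  have r2: "(sqrt (- ln (1 - real k / real n)))^2 = ln x - ln a"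
  proof -
    have "a / x \<le> 1" using xa apos by simp
    hence "ln (a/x) \<le> 0" using apos by (subst ln_le_zero_iff) auto
    thus ?thesis unfolding frac using apos by (simp add: ln_div)
  qed
  have lnE: "ln ((Gamma (x + t) / Gamma x) * (Gamma a / Gamma (a + t))) =
        (ln_Gamma (x+t) - ln_Gamma x) - (ln_Gamma (a+t) - ln_Gamma a)"
    using apos by (simp add: Gamma_real_pos_exp ln_mult ln_div exp_diff[symmetric] exp_add[symmetric])
  define g where "g z = ln_Gamma (z+t) - ln_Gamma z - t * ln z" for z
  have E: "ln ((Gamma (x + t) / Gamma x) * (Gamma a / Gamma (a + t))) - (ln x - ln a) * t = g x - g a"
    unfolding lnE g_def by (simp add: algebra_simps)
  have T0: "T \<ge> 0" using tT by linarith
  have gb: "\<bar>g z\<bar> \<le> 2 * (1 + T) * \<bar>t\<bar> / a" if z: "z \<ge> a" for z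
  proof -
    have zp: "z > 0" "z + t > 0" using z apos ta' by linarith+
    have "\<bar>g z\<bar> \<le> \<bar>t\<bar> * (1 + \<bar>t\<bar>) / min z (z+t)" unfolding g_def by (rule ln_Gamma_incr_bound[OF zp])
    also have "\<dots> \<le> \<bar>t\<bar> * (1 + T) / (a/2)"
    proof (rule frac_le)
      show "\<bar>t\<bar> * (1 + \<bar>t\<bar>) \<le> \<bar>t\<bar> * (1 + T)" using tT by (intro mult_left_mono) auto
      show "a/2 \<le> min z (z+t)" using z ta' apos by auto
    qed (use apos T0 in auto)
    also have "\<dots> = 2 * (1 + T) * \<bar>t\<bar> / a" using apos by (simp add: field_simps)
    finally show ?thesis .
  qed
  have "\<bar>g x - g a\<bar> \<le> 4 * (1 + T) * \<bar>t\<bar> / a"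
  proof -
    have "4 * (1 + T) * \<bar>t\<bar> / a = 2 * (1 + T) * \<bar>t\<bar> / a + 2 * (1 + T) * \<bar>t\<bar> / a"
      by (simp add: field_simps)
    thus ?thesis using gb[OF xa] gb[of a] by linarith
  qed
  then show ?thesis using E unfolding r2 by (simp add: x_def a_def)
qed


lemma lim_bound_aux: "(\<lambda>n. 2 * T / sqrt (real n) + 2 * K / sqrt (ln (real n) / 2)) \<longlonglongrightarrow> (0::real)"
  by real_asymp

theorem lemma3:
  fixes p :: "nat \<Rightarrow> nat" and t :: "nat \<Rightarrow> real" and y :: real
  assumes "eventually (\<lambda>n. p n < n) sequentially"
    and "0 < y" and "y \<le> 1"
    and "(\<lambda>n. real (p n) / real n) \<longlonglongrightarrow> y"
    and "t \<in> O(\<lambda>n. 1 / r_seq p n)"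
  shows "(\<lambda>n. ln ((Gamma (real n / 2 + t n) / Gamma (real n / 2)) *
                  (Gamma (real (n - p n) / 2) / Gamma (real (n - p n) / 2 + t n)))
              - (r_seq p n)^2 * t n) \<longlonglongrightarrow> 0"
proof -
  note pn = assms(1)
  define r where "r = r_seq p"
  define a where "a n = real (n - p n) / 2" for n
  define r0 where "r0 = sqrt (- ln (1 - y/2))"
  have r0: "r0 > 0" using assms(2,3) unfolding r0_def by (simp add: ln_less_zero_iff)
  have ev_y: "eventually (\<lambda>n. real (p n) / real n > y/2) sequentially"
    using order_tendstoD(1)[OF assms(4), of "y/2"] assms(2) by simp
  have ev_r: "eventually (\<lambda>n. r n \<ge> r0) sequentially"
    using ev_y pn
  proof eventually_elim
    case (elim n)
    have n0: "real n > 0" using elim(2) by simp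
    have "0 < 1 - real (p n) / real n" using elim(2) n0 by (simp add: field_simps)
    moreover have "1 - real (p n) / real n \<le> 1 - y/2" using elim(1) by simp
    ultimately have "ln (1 - real (p n) / real n) \<le> ln (1 - y/2)" using assms(3) by (subst ln_le_cancel_iff) auto
    thus ?case unfolding r_def r_seq_def r0_def by simp
  qed
  obtain K where K: "K > 0" "eventually (\<lambda>n. norm (t n) \<le> K * norm (1 / r_seq p n)) sequentially"
    using assms(5) by (elim landau_o.bigE) auto
  define T where "T = K / r0"
  have ev_t: "eventually (\<lambda>n. \<bar>t n\<bar> \<le> K / r n \<and> \<bar>t n\<bar> \<le> T) sequentially"
    using K(2) ev_r
  proof eventually_elim
    case (elim n)
    have rp: "r n > 0" using elim(2) r0 by linarith
    have 1: "\<bar>t n\<bar> \<le> K / r n" using elim(1) rp unfolding r_def by simp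
    have "K / r n \<le> K / r0" using K(1) r0 elim(2) by (intro divide_left_mono) auto
    with 1 show ?case unfolding T_def by simp
  qed
  have ev_bound: "eventually (\<lambda>n. \<bar>t n\<bar> / a n \<le> 2 * T / sqrt (real n) + 2 * K / sqrt (ln (real n) / 2)) sequentially"
    using ev_t ev_r pn eventually_ge_at_top[of 2]
  proof eventually_elim
    case (elim n)
    have rp: "r n > 0" using elim(2) r0 by linarith
    have n2: "real n \<ge> 2" using elim(4) by simp
    have lnn: "ln (real n) > 0" using n2 by simp
    define m where "m = real (n - p n)"
    have m1: "m \<ge> 1" using elim(3) by (simp add: m_def)
    have am: "a n = m / 2" by (simp add: a_def m_def)
    have frac: "1 - real (p n) / real n = m / real n" using elim(3) n2 by (simp add: m_def of_nat_diff field_simps)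
    have r2: "(r n)^2 = ln (real n) - ln m"
    proof -
      have "m / real n \<le> 1" using elim(3) by (simp add: m_def)
      hence "ln (m / real n) \<le> 0" using m1 n2 by (subst ln_le_zero_iff) auto
      thus ?thesis unfolding r_def r_seq_def frac using m1 n2 by (simp add: ln_div)
    qed
    have T0: "T \<ge> 0" using elim(1) by linarith
    have K0: "0 \<le> 2 * K / sqrt (ln (real n) / 2)" using K(1) lnn by simp
    have T0': "0 \<le> 2 * T / sqrt (real n)" using T0 by simp
    show ?case
    proof (cases "(r n)^2 \<le> ln (real n) / 2")
      case True
      have "ln m \<ge> ln (real n) / 2" using True r2 by simp
      also have "ln (real n) / 2 = ln (sqrt (real n))" using n2 by (simp add: ln_sqrt)
      finally have "sqrt (real n) \<le> m" using m1 n2 by simp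
      hence "\<bar>t n\<bar> / a n \<le> 2 * T / sqrt (real n)"
        unfolding am using elim(1) T0 n2 m1 by (simp add: frac_le)
      thus ?thesis using K0 by linarith
    next
      case False
      hence "sqrt (ln (real n) / 2) \<le> r n" using rp
        proof -
          have "sqrt (ln (real n) / 2) \<le> sqrt ((r n)^2)" using False by (intro real_sqrt_le_mono) simp
          thus ?thesis using rp by simp
        qed
      hence "K / r n \<le> K / sqrt (ln (real n) / 2)" using K(1) lnn rp by (intro divide_left_mono) auto
      hence "\<bar>t n\<bar> \<le> K / sqrt (ln (real n) / 2)" using elim(1) by linarith
      moreover have "\<bar>t n\<bar> / a n \<le> 2 * \<bar>t n\<bar>" unfolding am using m1 mult_right_mono[OF m1, of "\<bar>t n\<bar>"] by (simp add: field_simps)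
      ultimately show ?thesis using T0' by linarith
    qed
  qed
  have lim_b: "(\<lambda>n. 2 * T / sqrt (real n) + 2 * K / sqrt (ln (real n) / 2)) \<longlonglongrightarrow> 0"
    by (rule lim_bound_aux)
  have ta0: "(\<lambda>n. \<bar>t n\<bar> / a n) \<longlonglongrightarrow> 0"
    by (rule Lim_null_comparison[OF _ lim_b]) (use ev_bound pn in \<open>eventually_elim, simp add: a_def\<close>)
  have ev_half: "eventually (\<lambda>n. \<bar>t n\<bar> / a n < 1/2) sequentially"
    using order_tendstoD(2)[OF ta0, of "1/2"] by simp
  have lim_c: "(\<lambda>n. 4 * (1 + T) * (\<bar>t n\<bar> / a n)) \<longlonglongrightarrow> 0"
    using tendsto_mult_right_zero[OF ta0, of "4 * (1 + T)"] by simp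
  show ?thesis
  proof (rule Lim_null_comparison[OF _ lim_c])
    show "eventually (\<lambda>n. norm (ln ((Gamma (real n / 2 + t n) / Gamma (real n / 2)) *
                  (Gamma (real (n - p n) / 2) / Gamma (real (n - p n) / 2 + t n)))
              - (r_seq p n)^2 * t n) \<le> 4 * (1 + T) * (\<bar>t n\<bar> / a n)) sequentially"
      using ev_half ev_t pn
    proof eventually_elim
      case (elim n)
      have ap: "a n > 0" using elim(3) by (simp add: a_def)
      have "\<bar>t n\<bar> \<le> real (n - p n) / 2 / 2" using elim(1) ap by (simp add: a_def field_simps)
      from pointwise_bound[OF elim(3) this conjunct2[OF elim(2)]]
      show ?case by (simp add: r_seq_def a_def)
    qed
  qed
qed

end
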